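(* Let $s\ge1$ be an integer, let $p$ be a prime, and let $n=p^k$ with $k\ge 2s$. Let $G=\langle p^{k-s}+1\rangle$ be the subgroup of $\mathbb{Z}_n^\times$ generated by $p^{k-s}+1$. Then the coset index function $f_G$ is a $$\left(p^k,\ (sp+p-s)p^{k-s-1},\ \bigcup_{i=0}^{s-1}\Big\{0,\ \sum_{j=0}^{i}\varphi(p^{k-j})\Big\}\right)$$ zero-difference function, where $\varphi$ is Euler's totient function.
   Context: For a subgroup $G$ of $\mathbb{Z}_n^\times$ and $r\in\mathbb{Z}_n$, the coset $rG=\{rg\mid g\in G\}$; these cosets partition $\mathbb{Z}_n$, forming a set $D_G$. The coset index function induced by $G$ is $f_G:\mathbb{Z}_n\to\mathbb{Z}_{|D_G|}$, $f_G(x)=h_G(C_x)$, where $C_x$ is the coset containing $x$ and $h_G:D_G\to\mathbb{Z}_{|D_G|}$ is a fixed bijection. A function $f:A\to B$ between finite abelian groups is an $(n,m,S)$ zero-difference function if $n=|A|$, $m=|f(A)|$, and for every nonzero $a\in A$, $|\{x\in A\mid f(x+a)=f(x)\}|\in S$. Here $A=(\mathbb{Z}_n,+)$. *)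

theory Defs
  imports "HOL-Number_Theory.Number_Theory"
begin

text \<open>Z_n is modelled as the carrier {0..<n} of naturals with arithmetic mod n.\<close>

text \<open>The subgroup of Z_n^x generated by a unit g: in a finite group this is the
  set of all powers of g.\<close>
definition cyclic_subgroup :: "nat \<Rightarrow> nat \<Rightarrow> nat set" where
  "cyclic_subgroup n g = {g ^ i mod n | i. True}"

definition coset_of :: "nat \<Rightarrow> nat set \<Rightarrow> nat \<Rightarrow> nat set" where
  "coset_of n G r = {(r * x) mod n | x. x \<in> G}"

definition coset_family :: "nat \<Rightarrow> nat set \<Rightarrow> nat set set" where
  "coset_family n G = coset_of n G ` {0..<n}"

definition coset_index_fun :: "nat \<Rightarrow> nat set \<Rightarrow> (nat set \<Rightarrow> nat) \<Rightarrow> nat \<Rightarrow> nat" where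
  "coset_index_fun n G h x = h (THE C. C \<in> coset_family n G \<and> x \<in> C)"

definition zero_difference_fun :: "nat \<Rightarrow> nat \<Rightarrow> nat set \<Rightarrow> (nat \<Rightarrow> 'b) \<Rightarrow> bool" where
  "zero_difference_fun n m S f \<longleftrightarrow>
     m = card (f ` {0..<n}) \<and>
     (\<forall>a \<in> {1..<n}. card {x \<in> {0..<n}. f ((x + a) mod n) = f x} \<in> S)"

end

theory Submission
  imports Defs
begin

lemma card_multiples:
  fixes d N :: nat
  assumes "d > 0" "d dvd N"
  shows "card {x \<in> {0..<N}. d dvd x} = N div d"
proof -
  have "x \<in> {x \<in> {0..<N}. d dvd x} \<longleftrightarrow> x \<in> (\<lambda>t. d * t) ` {0..<N div d}" for x
  proof
    assume "x \<in> {x \<in> {0..<N}. d dvd x}"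
    then obtain t where "x = d * t" "x < N" by auto
    then have "t < N div d" using assms
      by (metis dvd_div_mult_self mult.commute mult_less_cancel2)
    then show "x \<in> (\<lambda>t. d * t) ` {0..<N div d}" using \<open>x = d * t\<close> by auto
  next
    assume "x \<in> (\<lambda>t. d * t) ` {0..<N div d}"
    then obtain t where "x = d * t" "t < N div d" by (meson atLeastLessThan_iff imageE)
    then have "x < N" using assms
      by (metis dvd_div_mult_self mult.commute mult_less_cancel2)
    then show "x \<in> {x \<in> {0..<N}. d dvd x}" using \<open>x = d * t\<close> by auto
  qed
  then have "{x \<in> {0..<N}. d dvd x} = (\<lambda>t. d * t) ` {0..<N div d}" by blast
  moreover have "inj_on (\<lambda>t. d * t) {0..<N div d}" using assms by (auto simp: inj_on_def)
  ultimately show ?thesis by (simp add: card_image)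
qed

locale zd =
  fixes p k s :: nat
  assumes s1: "s \<ge> 1" and pr: "prime p" and ks: "k \<ge> 2*s"
begin

abbreviation "n \<equiv> p ^ k"
abbreviation "q \<equiv> p ^ (k - s)"
abbreviation "P \<equiv> p ^ s"
abbreviation "G \<equiv> cyclic_subgroup n (q + 1)"

lemma p2: "p \<ge> 2" using pr prime_ge_2_nat by blast
lemma n_eq: "n = q * P"
proof -
  have "k = (k - s) + s" using ks by simp
  then show ?thesis by (metis power_add)
qed
lemma P_dvd_q: "P dvd q" using ks by (intro le_imp_power_dvd) auto
lemma n_dvd_qq: "n dvd q * q"
proof -
  have "q * q = p ^ (2*(k-s))" by (simp add: power_add mult_2)
  moreover have "k \<le> 2*(k-s)" using ks by simp
  ultimately show ?thesis by (metis le_imp_power_dvd)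
qed
lemma q_pos: "q > 0" using p2 by simp
lemma P_pos: "P > 0" using p2 by simp

lemma pow_cong: "[(q + 1) ^ i = 1 + i * q] (mod n)"
proof (induction i)
  case 0 then show ?case by simp
next
  case (Suc i)
  have "(q + 1) ^ Suc i = (q+1)^i * (q+1)" by simp
  moreover have "[(q+1)^i * (q+1) = (1 + i*q) * (q+1)] (mod n)" using Suc cong_mult cong_refl by blast
  moreover have "(1 + i*q) * (q+1) = (1 + Suc i * q) + i * (q * q)" by (simp add: algebra_simps)
  moreover have "[(1 + Suc i * q) + i * (q * q) = 1 + Suc i * q] (mod n)"
    using n_dvd_qq by (metis cong_add_lcancel_0_nat cong_0_iff dvd_mult)
  ultimately show ?case by (metis cong_trans)
qed

lemma elem_eq: "(x * ((q+1)^t mod n)) mod n = (x + (x*q)*t) mod n"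
proof -
  have "(q+1)^t mod n = (1 + t*q) mod n" using pow_cong unfolding cong_def by blast
  then have "(x * ((q+1)^t mod n)) mod n = (x * (1 + t*q)) mod n" by (metis mod_mult_right_eq)
  also have "x * (1 + t*q) = x + (x*q)*t" by (simp add: algebra_simps)
  finally show ?thesis .
qed

lemma coset_alt: "coset_of n G x = range (\<lambda>t. (x + (x*q)*t) mod n)"
proof -
  have "coset_of n G x = range (\<lambda>i. x * ((q+1)^i mod n) mod n)"
    unfolding coset_of_def cyclic_subgroup_def by blast
  also have "\<dots> = range (\<lambda>t. (x + (x*q)*t) mod n)" using elem_eq by presburger
  finally show ?thesis .
qed

lemma D_dvd_n: "q * gcd x P dvd n" using n_eq by simp
lemma D_gcd: "q * gcd x P = gcd (x*q) n" using n_eq gcd_mult_distrib_nat[of q x P] by (simp add: mult.commute)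

lemma coset_char:
  assumes "x < n"
  shows "coset_of n G x = {y. y < n \<and> [y = x] (mod q * gcd x P)}"
proof -
  let ?D = "q * gcd x P"
  have "z \<in> coset_of n G x \<longleftrightarrow> z < n \<and> [z = x] (mod ?D)" for z
  proof
    assume "z \<in> coset_of n G x"
    then obtain t where z: "z = (x + (x*q)*t) mod n" using coset_alt by auto
    have "z < n" using z p2 by simp
    have "[z = x + (x*q)*t] (mod n)" using z by (simp add: cong_def)
    then have "[z = x + (x*q)*t] (mod ?D)" using D_dvd_n cong_dvd_modulus_nat by blast
    moreover have "?D dvd (x*q)*t" by (simp add: mult.commute)
    then have "[x + (x*q)*t = x] (mod ?D)" by (metis cong_add_lcancel_0_nat cong_0_iff cong_sym)
    ultimately show "z < n \<and> [z = x] (mod ?D)" using \<open>z < n\<close> cong_trans by blast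
  next
    assume a: "z < n \<and> [z = x] (mod ?D)"
    have "[z + n = z] (mod ?D)" using D_dvd_n by (metis cong_add_lcancel_0_nat cong_0_iff)
    then have "[z + n = x] (mod ?D)" using a cong_trans by blast
    moreover have "x \<le> z + n" using assms by simp
    ultimately have "\<exists>m. z + n = m * ?D + x" using cong_le_nat by blast
    then obtain m where m: "z + n = m * ?D + x" by blast
    have "gcd (x*q) n dvd ?D * m" using D_gcd by simp
    then obtain t where t: "[(x*q)*t = ?D * m] (mod n)" using cong_solve_dvd_nat by blast
    have "[x + (x*q)*t = x + ?D * m] (mod n)" using t cong_add cong_refl by blast
    also have "x + ?D * m = z + n" using m by simp
    also have "[z + n = z] (mod n)" by (simp add: cong_def)
    finally have "(x + (x*q)*t) mod n = z" using a by (simp add: cong_def)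
    then show "z \<in> coset_of n G x" using coset_alt by auto
  qed
  then show ?thesis by blast
qed

lemma gcd_cong: "[y = x] (mod q * gcd x P) \<Longrightarrow> gcd y P = gcd x P"
proof -
  assume "[y = x] (mod q * gcd x P)"
  then have "[y = x] (mod P)" using P_dvd_q cong_dvd_modulus_nat dvd_mult2 by blast
  then show ?thesis using cong_gcd_eq by blast
qed

lemma self_in: "x < n \<Longrightarrow> x \<in> coset_of n G x" using coset_char by simp

lemma coset_eq_iff:
  assumes "x < n" "y < n"
  shows "coset_of n G y = coset_of n G x \<longleftrightarrow> [y = x] (mod q * gcd x P)"
proof
  assume "coset_of n G y = coset_of n G x"
  then have "y \<in> coset_of n G x" using self_in assms by blast
  then show "[y = x] (mod q * gcd x P)" using coset_char assms by simp
next
  assume c: "[y = x] (mod q * gcd x P)"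
  then have g: "gcd y P = gcd x P" by (rule gcd_cong)
  have "[z = y] (mod q * gcd x P) \<longleftrightarrow> [z = x] (mod q * gcd x P)" for z
    using c cong_trans cong_sym by metis
  then show "coset_of n G y = coset_of n G x" using coset_char assms g by simp
qed

lemma index_fun:
  assumes "x < n"
  shows "coset_index_fun n G h x = h (coset_of n G x)"
proof -
  have "(THE C. C \<in> coset_family n G \<and> x \<in> C) = coset_of n G x"
  proof (rule the_equality)
    show "coset_of n G x \<in> coset_family n G \<and> x \<in> coset_of n G x"
      using assms self_in unfolding coset_family_def by auto
  next
    fix C assume "C \<in> coset_family n G \<and> x \<in> C"
    then obtain z where z: "z < n" "C = coset_of n G z" "x \<in> coset_of n G z"
      unfolding coset_family_def by auto
    then have "[x = z] (mod q * gcd z P)" using coset_char by simp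
    then have "coset_of n G x = coset_of n G z" using coset_eq_iff[of z x] z assms by simp
    then show "C = coset_of n G x" using z by simp
  qed
  then show ?thesis unfolding coset_index_fun_def by simp
qed

lemma gcd_pow: obtains j where "j \<le> s" "gcd x P = p ^ j"
  using divides_primepow_nat[OF pr, of "gcd x P" s] by auto

lemma pdvd_iff: "i \<le> j \<longleftrightarrow> p ^ i dvd p ^ j" using dvd_power_iff_le p2 by simp

lemma pdvd_gcd: "i \<le> s \<Longrightarrow> p ^ i dvd x \<longleftrightarrow> p ^ i dvd gcd x P"
  using le_imp_power_dvd[of i s p] by simp

lemma zd_iff:
  assumes inj: "inj_on h (coset_family n G)" and x: "x < n" and a: "a < n"
  shows "coset_index_fun n G h ((x + a) mod n) = coset_index_fun n G h x \<longleftrightarrow> q * gcd x P dvd a"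
proof -
  let ?D = "q * gcd x P"
  have y: "(x + a) mod n < n" using p2 by simp
  have mem: "coset_of n G z \<in> coset_family n G" if "z < n" for z
    using that unfolding coset_family_def by auto
  have "coset_index_fun n G h ((x + a) mod n) = coset_index_fun n G h x \<longleftrightarrow>
        coset_of n G ((x + a) mod n) = coset_of n G x"
    using index_fun x y inj mem[OF x] mem[OF y] by (metis inj_on_eq_iff)
  also have "\<dots> \<longleftrightarrow> [(x + a) mod n = x] (mod ?D)" using coset_eq_iff x y by blast
  also have "\<dots> \<longleftrightarrow> [x + a = x] (mod ?D)"
    unfolding cong_def using D_dvd_n mod_mod_cancel by metis
  also have "\<dots> \<longleftrightarrow> ?D dvd a" by (simp add: cong_add_lcancel_0_nat cong_0_iff)
  finally show ?thesis .
qed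

lemma tot_pp: "totient (p ^ Suc m) = p ^ Suc m - p ^ m"
  using totient_prime_power_Suc[OF pr, of m] by (simp add: algebra_simps)

lemma sum_tot: "i < k \<Longrightarrow> (\<Sum>j=0..i. totient (p ^ (k - j))) = p ^ k - p ^ (k - Suc i)"
proof (induction i)
  case 0
  then obtain m where "k = Suc m" by (metis Suc_pred)
  then show ?case using tot_pp by simp
next
  case (Suc i)
  then have IH: "(\<Sum>j=0..i. totient (p ^ (k - j))) = p ^ k - p ^ (k - Suc i)" by simp
  obtain m where m: "k - Suc i = Suc m" using Suc.prems by (metis Suc_diff_Suc zero_less_diff)
  have T: "totient (p ^ (k - Suc i)) = p ^ Suc m - p ^ m" using m tot_pp by simp
  have S: "(\<Sum>j=0..Suc i. totient (p ^ (k - j))) = p ^ k - p ^ (k - Suc i) + (p ^ Suc m - p ^ m)"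
    using IH T by simp
  have "p ^ m \<le> p ^ Suc m" using p2 by simp
  moreover have "p ^ Suc m \<le> p ^ k" using m p2 by (intro power_increasing) auto
  moreover have "k - Suc (Suc i) = m" using m by simp
  ultimately show ?case using S m by simp
qed

lemma count_mem:
  assumes "a \<in> {1..<n}"
  shows "card {x \<in> {0..<n}. q * gcd x P dvd a} \<in> (\<Union>i\<in>{0..<s}. {0, \<Sum>j=0..i. totient (p ^ (k - j))})"
proof (cases "q dvd a")
  case False
  then have "{x \<in> {0..<n}. q * gcd x P dvd a} = {}" using dvd_mult_left by blast
  then show ?thesis using s1 by auto
next
  case True
  then obtain b where b: "a = q * b" by blast
  have "b > 0" using assms b by auto
  have "b < P" using assms b n_eq by auto
  obtain i where i: "i \<le> s" "gcd b P = p ^ i" using gcd_pow by blast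
  have "i \<noteq> s"
  proof
    assume "i = s"
    then have "P dvd b" using i by (metis gcd_dvd1)
    then show False using \<open>b > 0\<close> \<open>b < P\<close> by (simp add: nat_dvd_not_less)
  qed
  with i have i_s: "i < s" by simp
  have "q * gcd x P dvd a \<longleftrightarrow> \<not> p ^ Suc i dvd x" for x
  proof -
    obtain j where j: "j \<le> s" "gcd x P = p ^ j" using gcd_pow by blast
    have "q * gcd x P dvd a \<longleftrightarrow> gcd x P dvd b" using b q_pos p2 by simp
    also have "\<dots> \<longleftrightarrow> gcd x P dvd gcd b P" by simp
    also have "\<dots> \<longleftrightarrow> j \<le> i" using i j pdvd_iff by simp
    also have "\<dots> \<longleftrightarrow> \<not> Suc i \<le> j" by linarith
    also have "\<dots> \<longleftrightarrow> \<not> p ^ Suc i dvd gcd x P" using j pdvd_iff by simp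
    also have "\<dots> \<longleftrightarrow> \<not> p ^ Suc i dvd x" using pdvd_gcd[of "Suc i" x] i_s by simp
    finally show ?thesis .
  qed
  note key = this
  have E: "{x \<in> {0..<n}. q * gcd x P dvd a} = {0..<n} - {x \<in> {0..<n}. p ^ Suc i dvd x}"
    using key by blast
  have d: "p ^ Suc i dvd n" using i_s ks by (intro le_imp_power_dvd) simp
  have "card ({0..<n} - {x \<in> {0..<n}. p ^ Suc i dvd x}) = n - card {x \<in> {0..<n}. p ^ Suc i dvd x}"
    by (subst card_Diff_subset) auto
  also have "card {x \<in> {0..<n}. p ^ Suc i dvd x} = n div p ^ Suc i"
    using card_multiples[of "p ^ Suc i" n] p2 d by simp
  finally have "card {x \<in> {0..<n}. q * gcd x P dvd a} = n - n div p ^ Suc i" using E by simp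
  also have "n div p ^ Suc i = p ^ (k - Suc i)" using power_diff[of p "Suc i" k] p2 i_s ks by simp
  also have "p ^ k - p ^ (k - Suc i) = (\<Sum>j=0..i. totient (p ^ (k - j)))" using sum_tot[of i] i_s ks by simp
  finally show ?thesis using i_s by auto
qed

definition "R = {x \<in> {0..<n}. x < q * gcd x P}"

lemma fam_img: "coset_family n G = coset_of n G ` R"
proof -
  have "coset_of n G y \<in> coset_of n G ` R" if y: "y < n" for y
  proof -
    let ?D = "q * gcd y P"
    have Dp: "?D > 0" using q_pos P_pos by simp
    have r: "y mod ?D < ?D" using Dp by simp
    have c: "[y mod ?D = y] (mod ?D)" by (simp add: cong_def)
    have g: "gcd (y mod ?D) P = gcd y P" using gcd_cong c by blast
    have "?D \<le> n" using D_dvd_n p2 by (intro dvd_imp_le) auto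
    then have rn: "y mod ?D < n" using r by linarith
    have "y mod ?D \<in> R" unfolding R_def using rn r g by simp
    moreover have "coset_of n G (y mod ?D) = coset_of n G y" using coset_eq_iff rn y c by blast
    ultimately show ?thesis by (metis image_eqI)
  qed
  moreover have "R \<subseteq> {0..<n}" unfolding R_def by auto
  ultimately show ?thesis unfolding coset_family_def by auto
qed

lemma fam_inj: "inj_on (coset_of n G) R"
proof (rule inj_onI)
  fix x y assume x: "x \<in> R" and y: "y \<in> R" and e: "coset_of n G x = coset_of n G y"
  have "x < n" "y < n" using x y unfolding R_def by auto
  then have c: "[y = x] (mod q * gcd x P)" using coset_eq_iff[of x y] e by simp
  then have g: "gcd y P = gcd x P" by (rule gcd_cong)
  have "y < q * gcd x P" "x < q * gcd x P" using x y g unfolding R_def by auto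
  then show "x = y" using c by (simp add: cong_def)
qed

lemma card_fam: "card (coset_family n G) = card R"
  using fam_img fam_inj card_image by metis

definition "B j = {x \<in> {0..<q * p ^ j}. gcd x P = p ^ j}"

lemma R_Un: "R = (\<Union>j\<in>{0..s}. B j)"
proof -
  have "x \<in> R \<longleftrightarrow> (\<exists>j\<in>{0..s}. x \<in> B j)" for x
  proof
    assume "x \<in> R"
    moreover obtain j where "j \<le> s" "gcd x P = p ^ j" using gcd_pow by blast
    ultimately show "\<exists>j\<in>{0..s}. x \<in> B j" unfolding R_def B_def by auto
  next
    assume "\<exists>j\<in>{0..s}. x \<in> B j"
    then obtain j where j: "j \<le> s" "x < q * p ^ j" "gcd x P = p ^ j" unfolding B_def by auto
    have "q * p ^ j \<le> q * P" using j p2 by (intro mult_le_mono2 power_increasing) auto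
    then have "x < n" using j(2) n_eq by linarith
    then show "x \<in> R" using j unfolding R_def by simp
  qed
  then show ?thesis by blast
qed

lemma B_disj: "i \<noteq> j \<Longrightarrow> B i \<inter> B j = {}"
  unfolding B_def using p2 by (auto simp: power_inject_exp)

lemma gcd_eq_pj: "j < s \<Longrightarrow> gcd x P = p ^ j \<longleftrightarrow> p ^ j dvd x \<and> \<not> p ^ Suc j dvd x"
proof -
  assume js: "j < s"
  obtain i where i: "i \<le> s" "gcd x P = p ^ i" using gcd_pow by blast
  have A1: "p ^ j dvd x \<longleftrightarrow> p ^ j dvd gcd x P" by (rule pdvd_gcd) (use js in simp)
  have A2: "p ^ Suc j dvd x \<longleftrightarrow> p ^ Suc j dvd gcd x P" by (rule pdvd_gcd) (use js in simp)
  have "p ^ j dvd x \<longleftrightarrow> j \<le> i" using A1[unfolded i(2)] pdvd_iff by blast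
  moreover have "p ^ Suc j dvd x \<longleftrightarrow> Suc j \<le> i" using A2[unfolded i(2)] pdvd_iff by blast
  moreover have "p ^ i = p ^ j \<longleftrightarrow> i = j" using p2 by (simp add: power_inject_exp)
  ultimately show ?thesis using i by auto
qed

lemma card_B_lt:
  assumes js: "j < s"
  shows "card (B j) = q - q div p"
proof -
  let ?N = "q * p ^ j"
  have E: "B j = {x \<in> {0..<?N}. p ^ j dvd x} - {x \<in> {0..<?N}. p ^ Suc j dvd x}"
    unfolding B_def using gcd_eq_pj[OF js] by auto
  have ks1: "k - s \<ge> 1" using ks s1 by simp
  have d1: "p ^ j dvd ?N" by simp
  have d2: "p ^ Suc j dvd ?N"
  proof -
    have "p dvd q" using ks1 by (metis dvd_power le_add_diff_inverse2 add_gr_0 zero_less_one)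
    then show ?thesis by (simp add: mult.commute mult_dvd_mono)
  qed
  have "card (B j) = card {x \<in> {0..<?N}. p ^ j dvd x} - card {x \<in> {0..<?N}. p ^ Suc j dvd x}"
    unfolding E by (rule card_Diff_subset) (auto intro: dvd_trans[of _ "p ^ Suc j"])
  also have "card {x \<in> {0..<?N}. p ^ j dvd x} = q"
    using card_multiples[OF _ d1] p2 by simp
  also have "card {x \<in> {0..<?N}. p ^ Suc j dvd x} = ?N div p ^ Suc j"
    using card_multiples[OF _ d2] p2 by simp
  also have "?N div p ^ Suc j = q div p" using p2
    by (metis div_mult2_eq mult.commute nonzero_mult_div_cancel_left power_Suc power_not_zero not_numeral_le_zero)
  finally show ?thesis .
qed

lemma card_B_s: "card (B s) = q"
proof -
  have gP: "gcd x P = P \<longleftrightarrow> P dvd x" for x by (metis gcd_dvd1 gcd_nat.absorb2)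
  have "B s = {x \<in> {0..<n}. P dvd x}" unfolding B_def using n_eq gP by auto
  then show ?thesis using card_multiples[of P n] P_pos n_eq by simp
qed

lemma card_R: "card R = (s * p + p - s) * p ^ (k - s - 1)"
proof -
  have fin: "finite (B j)" for j unfolding B_def by simp
  have "card R = (\<Sum>j\<in>{0..s}. card (B j))"
    unfolding R_Un by (rule card_UN_disjoint) (auto simp: fin B_disj)
  also have "{0..s} = insert s {0..<s}" by auto
  also have "(\<Sum>j\<in>insert s {0..<s}. card (B j)) = q + (\<Sum>j\<in>{0..<s}. card (B j))"
    by (simp add: card_B_s)
  also have "(\<Sum>j\<in>{0..<s}. card (B j)) = s * (q - q div p)" using card_B_lt by simp
  finally have c: "card R = q + s * (q - q div p)" .
  let ?r = "p ^ (k - s - 1)"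
  have "k - s = Suc (k - s - 1)" using ks s1 by simp
  then have qr: "q = p * ?r" by (metis power_Suc)
  then have "q div p = ?r" using p2 by simp
  then have "card R = p * ?r + s * (p * ?r - ?r)" using c qr by simp
  also have "\<dots> = (s * p + p - s) * ?r"
  proof -
    have "s \<le> s * p" using p2 by simp
    then show ?thesis by (simp add: algebra_simps diff_mult_distrib diff_mult_distrib2)
  qed
  finally show ?thesis .
qed

end

theorem theorem3p7:
  fixes s p k :: nat and h :: "nat set \<Rightarrow> nat"
  assumes "s \<ge> 1" and "prime p" and "k \<ge> 2 * s"
    and "bij_betw h (coset_family (p ^ k) (cyclic_subgroup (p ^ k) (p ^ (k - s) + 1)))
           {0..<card (coset_family (p ^ k) (cyclic_subgroup (p ^ k) (p ^ (k - s) + 1)))}"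
  shows "zero_difference_fun (p ^ k) ((s * p + p - s) * p ^ (k - s - 1))
           (\<Union>i\<in>{0..<s}. {0, \<Sum>j=0..i. totient (p ^ (k - j))})
           (coset_index_fun (p ^ k) (cyclic_subgroup (p ^ k) (p ^ (k - s) + 1)) h)"
proof -
  interpret Z: zd p k s using assms by unfold_locales auto
  let ?G = "cyclic_subgroup (p ^ k) (p ^ (k - s) + 1)"
  let ?f = "coset_index_fun (p ^ k) ?G h"
  have inj: "inj_on h (coset_family (p ^ k) ?G)" using assms(4) bij_betw_def by blast
  have img: "?f ` {0..<p ^ k} = h ` coset_family (p ^ k) ?G"
  proof -
    have "?f ` {0..<p ^ k} = h ` (coset_of (p ^ k) ?G ` {0..<p ^ k})"
      using Z.index_fun by (auto simp: image_iff)
    then show ?thesis unfolding coset_family_def by simp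
  qed
  have m: "(s * p + p - s) * p ^ (k - s - 1) = card (?f ` {0..<p ^ k})"
    unfolding img using card_image[OF inj] Z.card_fam Z.card_R by simp
  have "card {x \<in> {0..<p ^ k}. ?f ((x + a) mod p ^ k) = ?f x}
          \<in> (\<Union>i\<in>{0..<s}. {0, \<Sum>j=0..i. totient (p ^ (k - j))})" if a: "a \<in> {1..<p ^ k}" for a
  proof -
    have "{x \<in> {0..<p ^ k}. ?f ((x + a) mod p ^ k) = ?f x} =
          {x \<in> {0..<p ^ k}. p ^ (k - s) * gcd x (p ^ s) dvd a}"
      using Z.zd_iff[OF inj] a by auto
    then show ?thesis using Z.count_mem[OF a] by simp
  qed
  then show ?thesis unfolding zero_difference_fun_def using m by blast
qed

end
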